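(* Let $M\in\mathbb C\setminus\{0\}$ and $y\in\mathbb C$, and set $\rho(a)=\begin{bmatrix} M&1\\0&M^{-1}\end{bmatrix}$, $\rho(b)=\begin{bmatrix} M&0\\2-y&M^{-1}\end{bmatrix}$, extended multiplicatively to words in $a^{\pm1},b^{\pm1}$. Let $I$ be the $2\times2$ identity matrix. (1) If $m\ge1$ and $w=(ba^{-1})^m(b^{-1}a)^m$, then $$\rho(w)=I-S_m(y)S_{m-1}(y)\begin{bmatrix} y-2& M-M^{-1}\\ (M-M^{-1})(2-y) & 2-y\end{bmatrix}+S_{m-1}^2(y)\begin{bmatrix} (y-2)(y-M^2) & -(M^{-1}y-M-M^{-1})\\ (y-2)(M^{-1}y-M-M^{-1}) & M^{-2}(2-y)\end{bmatrix}.$$ (2) If $m\ge0$ and $w=(ba^{-1})^m\,ba\,(b^{-1}a)^m$, then $$\rho(w)=I-S_m(y)S_{m-1}(y)\begin{bmatrix} 2M^2-y & M+M^{-1}\\ (M+M^{-1})(2-y) & 2M^{-2}-y\end{bmatrix}+S_m^2(y)\begin{bmatrix} M^2-1 & M\\ M(2-y) & -y+1+M^{-2}\end{bmatrix}+S_{m-1}^2(y)\begin{bmatrix} -y+1+M^2 & M^{-1}\\ M^{-1}(2-y) & M^{-2}-1\end{bmatrix}.$$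
   Context: $S_l(v)$, $l\in\mathbb Z$, are the Chebyshev polynomials of the second kind: $S_0(v)=1$, $S_1(v)=v$, and $S_l(v)=vS_{l-1}(v)-S_{l-2}(v)$ for all integers $l$ (so e.g. $S_{-1}=0$). *)

theory Defs
  imports "HOL-Analysis.Analysis"
begin

fun cheb_S_nat :: "nat \<Rightarrow> complex \<Rightarrow> complex" where
  "cheb_S_nat 0 v = 1"
| "cheb_S_nat (Suc 0) v = v"
| "cheb_S_nat (Suc (Suc n)) v = v * cheb_S_nat (Suc n) v - cheb_S_nat n v"

text \<open>Extension to all integers by the same recurrence:
  S_(-1) = 0 and S_(-k) = - S_(k-2) for k >= 2.\<close>
definition cheb_S :: "int \<Rightarrow> complex \<Rightarrow> complex" where
  "cheb_S l v = (if l \<ge> 0 then cheb_S_nat (nat l) v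
                 else if l = -1 then 0
                 else - cheb_S_nat (nat (- l - 2)) v)"

definition mat2 :: "complex \<Rightarrow> complex \<Rightarrow> complex \<Rightarrow> complex \<Rightarrow> complex^2^2" where
  "mat2 p q r s = (\<chi> i j. if i = 1 then (if j = 1 then p else q)
                              else (if j = 1 then r else s))"

definition csmult :: "complex \<Rightarrow> complex^2^2 \<Rightarrow> complex^2^2" where
  "csmult c A = (\<chi> i j. c * A $ i $ j)"

datatype letter = A | Ainv | B | Binv

definition rho_letter :: "complex \<Rightarrow> complex \<Rightarrow> letter \<Rightarrow> complex^2^2" where
  "rho_letter M y g = (case g of
      A \<Rightarrow> mat2 M 1 0 (inverse M)
    | Ainv \<Rightarrow> matrix_inv (mat2 M 1 0 (inverse M))
    | B \<Rightarrow> mat2 M 0 (2 - y) (inverse M)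
    | Binv \<Rightarrow> matrix_inv (mat2 M 0 (2 - y) (inverse M)))"

fun rho_word :: "complex \<Rightarrow> complex \<Rightarrow> letter list \<Rightarrow> complex^2^2" where
  "rho_word M y [] = mat 1"
| "rho_word M y (g # w) = rho_letter M y g ** rho_word M y w"

end

theory Submission
  imports Defs
begin

lemma inv_unique:
  fixes A B :: "'a::semiring_1^'n^'n"
  assumes "A ** B = mat 1" "B ** A = mat 1"
  shows "matrix_inv A = B"
proof -
  let ?P = "\<lambda>A'. A ** A' = mat 1 \<and> A' ** A = mat 1"
  have "?P (matrix_inv A)" unfolding matrix_inv_def by (rule someI[of ?P B]) (use assms in auto)
  then have h: "matrix_inv A ** A = mat 1" by blast
  have "matrix_inv A = matrix_inv A ** (A ** B)" using assms by simp
  also have "\<dots> = B" by (simp add: matrix_mul_assoc h)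
  finally show ?thesis .
qed

lemma mat2_mult: "mat2 p q r s ** mat2 p2 q2 r2 s2 =
   mat2 (p * p2 + q * r2) (p * q2 + q * s2) (r * p2 + s * r2) (r * q2 + s * s2)"
  by (simp add: mat2_def matrix_matrix_mult_def vec_eq_iff forall_2 sum_2)

lemma mat2_one: "mat 1 = mat2 1 0 0 1"
  by (simp add: mat2_def mat_def vec_eq_iff forall_2)

lemma mat2_csmult: "csmult c (mat2 p q r s) = mat2 (c*p) (c*q) (c*r) (c * s)"
  by (simp add: mat2_def csmult_def vec_eq_iff forall_2)

lemma mat2_add: "mat2 p q r s + mat2 p2 q2 r2 s2 = mat2 (p+p2) (q+q2) (r+r2) (s+s2)"
  by (simp add: mat2_def vec_eq_iff forall_2)

lemma mat2_diff: "mat2 p q r s - mat2 p2 q2 r2 s2 = mat2 (p-p2) (q-q2) (r-r2) (s-s2)"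
  by (simp add: mat2_def vec_eq_iff forall_2)

lemma mat2_eq: "mat2 p q r s = mat2 p2 q2 r2 s2 \<longleftrightarrow> p = p2 \<and> q = q2 \<and> r = r2 \<and> s = s2"
  by (auto simp: mat2_def vec_eq_iff forall_2)

lemma mat2_inv: "p * s - q * r = 1 \<Longrightarrow> matrix_inv (mat2 p q r s) = mat2 s (-q) (-r) p"
  by (rule inv_unique) (simp_all add: mat2_mult mat2_one mat2_eq algebra_simps)

lemma rho_append: "rho_word M y (u @ v) = rho_word M y u ** rho_word M y v"
  by (induction u) (simp_all add: matrix_mul_assoc)

lemma cheb_rec: "cheb_S (int m + 1) y = y * cheb_S (int m) y - cheb_S (int m - 1) y"
proof (cases m)
  case 0 then show ?thesis by (simp add: cheb_S_def)
next
  case (Suc k)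
  have "nat (int m + 1) = Suc (Suc k)" "nat (int m) = Suc k" "nat (int m - 1) = k" using Suc by auto
  then show ?thesis using Suc by (simp add: cheb_S_def)
qed

lemma cassini: "(cheb_S (int m) y)^2 - y * cheb_S (int m) y * cheb_S (int m - 1) y + (cheb_S (int m - 1) y)^2 = 1"
proof (induction m)
  case 0 then show ?case by (simp add: cheb_S_def)
next
  case (Suc m)
  have e: "int (Suc m) - 1 = int m" "int (Suc m) = int m + 1" by auto
  show ?case unfolding e cheb_rec using Suc by (simp add: power2_eq_square algebra_simps)
qed

lemma powX: "rho_word M y (concat (replicate m [B, Ainv])) =
   mat2 (cheb_S (int m) y + cheb_S (int m - 1) y * (1 - y)) (cheb_S (int m - 1) y * (- M))
        (cheb_S (int m - 1) y * ((2 - y) * inverse M)) (cheb_S (int m) y + cheb_S (int m - 1) y * (- 1))"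
  if "M \<noteq> 0" for M y :: complex
proof (induction m)
  case 0 then show ?case by (simp add: cheb_S_def mat2_one)
next
  case (Suc m)
  have e: "int (Suc m) - 1 = int m" "int (Suc m) = int m + 1" by auto
  show ?case unfolding e cheb_rec using Suc that
    by (simp add: rho_letter_def mat2_inv mat2_mult mat2_eq field_simps)
qed

lemma powY: "rho_word M y (concat (replicate m [Binv, A])) =
   mat2 (cheb_S (int m) y + cheb_S (int m - 1) y * (1 - y)) (cheb_S (int m - 1) y * inverse M)
        (cheb_S (int m - 1) y * (- (2 - y) * M)) (cheb_S (int m) y + cheb_S (int m - 1) y * (- 1))"
  if "M \<noteq> 0" for M y :: complex
proof (induction m)
  case 0 then show ?case by (simp add: cheb_S_def mat2_one)
next
  case (Suc m)
  have e: "int (Suc m) - 1 = int m" "int (Suc m) = int m + 1" by auto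
  show ?case unfolding e cheb_rec using Suc that
    by (simp add: rho_letter_def mat2_inv mat2_mult mat2_eq field_simps)
qed

lemma alg1:
  fixes s t y M N :: complex
  assumes "s^2 - y * s * t + t^2 = 1" "M * N = 1"
  shows "mat2 (s + t * (1 - y)) (t * (- M)) (t * ((2 - y) * N)) (s + t * (- 1)) **
         mat2 (s + t * (1 - y)) (t * N) (t * (- (2 - y) * M)) (s + t * (- 1))
           = mat 1
             - csmult (s * t)
                 (mat2 (y - 2) (M - N) ((M - N) * (2 - y)) (2 - y))
             + csmult (t^2)
                 (mat2 ((y - 2) * (y - M^2)) (- (N * y - M - N))
                       ((y - 2) * (N * y - M - N)) (N^2 * (2 - y)))"
  unfolding mat2_mult mat2_one mat2_csmult mat2_add mat2_diff mat2_eq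
  apply (intro conjI) using assms by algebra+

lemma alg2:
  fixes s t y M N :: complex
  assumes "s^2 - y * s * t + t^2 = 1" "M * N = 1"
  shows "mat2 (s + t * (1 - y)) (t * (- M)) (t * ((2 - y) * N)) (s + t * (- 1)) **
         (mat2 M 0 (2 - y) N ** (mat2 M 1 0 N **
         mat2 (s + t * (1 - y)) (t * N) (t * (- (2 - y) * M)) (s + t * (- 1))))
           = mat 1
             - csmult (s * t)
                 (mat2 (2 * M^2 - y) (M + N) ((M + N) * (2 - y)) (2 * N^2 - y))
             + csmult (s^2)
                 (mat2 (M^2 - 1) M (M * (2 - y)) (- y + 1 + N^2))
             + csmult (t^2)
                 (mat2 (- y + 1 + M^2) N (N * (2 - y)) (N^2 - 1))"
  unfolding mat2_mult mat2_one mat2_csmult mat2_add mat2_diff mat2_eq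
  apply (intro conjI) using assms by algebra+

theorem proposition3p3:
  fixes M y :: complex
  assumes "M \<noteq> 0"
  shows "(\<forall>m::nat. m \<ge> 1 \<longrightarrow>
           rho_word M y (concat (replicate m [B, Ainv]) @ concat (replicate m [Binv, A]))
           = mat 1
             - csmult (cheb_S (int m) y * cheb_S (int m - 1) y)
                 (mat2 (y - 2) (M - inverse M) ((M - inverse M) * (2 - y)) (2 - y))
             + csmult ((cheb_S (int m - 1) y)^2)
                 (mat2 ((y - 2) * (y - M^2)) (- (inverse M * y - M - inverse M))
                       ((y - 2) * (inverse M * y - M - inverse M)) ((inverse M)^2 * (2 - y)))) \<and>
         (\<forall>m::nat.
           rho_word M y (concat (replicate m [B, Ainv]) @ [B, A] @ concat (replicate m [Binv, A]))
           = mat 1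
             - csmult (cheb_S (int m) y * cheb_S (int m - 1) y)
                 (mat2 (2 * M^2 - y) (M + inverse M) ((M + inverse M) * (2 - y)) (2 * (inverse M)^2 - y))
             + csmult ((cheb_S (int m) y)^2)
                 (mat2 (M^2 - 1) M (M * (2 - y)) (- y + 1 + (inverse M)^2))
             + csmult ((cheb_S (int m - 1) y)^2)
                 (mat2 (- y + 1 + M^2) (inverse M) (inverse M * (2 - y)) ((inverse M)^2 - 1)))"
proof (intro conjI allI impI)
  have MN: "M * inverse M = 1" using assms by simp
  fix m :: nat
  show "rho_word M y (concat (replicate m [B, Ainv]) @ concat (replicate m [Binv, A]))
           = mat 1
             - csmult (cheb_S (int m) y * cheb_S (int m - 1) y)
                 (mat2 (y - 2) (M - inverse M) ((M - inverse M) * (2 - y)) (2 - y))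
             + csmult ((cheb_S (int m - 1) y)^2)
                 (mat2 ((y - 2) * (y - M^2)) (- (inverse M * y - M - inverse M))
                       ((y - 2) * (inverse M * y - M - inverse M)) ((inverse M)^2 * (2 - y)))"
    unfolding rho_append powX[OF assms] powY[OF assms]
    by (rule alg1[OF cassini MN])
next
  have MN: "M * inverse M = 1" using assms by simp
  fix m :: nat
  show "rho_word M y (concat (replicate m [B, Ainv]) @ [B, A] @ concat (replicate m [Binv, A]))
           = mat 1
             - csmult (cheb_S (int m) y * cheb_S (int m - 1) y)
                 (mat2 (2 * M^2 - y) (M + inverse M) ((M + inverse M) * (2 - y)) (2 * (inverse M)^2 - y))
             + csmult ((cheb_S (int m) y)^2)
                 (mat2 (M^2 - 1) M (M * (2 - y)) (- y + 1 + (inverse M)^2))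
             + csmult ((cheb_S (int m - 1) y)^2)
                 (mat2 (- y + 1 + M^2) (inverse M) (inverse M * (2 - y)) ((inverse M)^2 - 1))"
    apply (rule trans[OF _ alg2[OF cassini MN]])
    by (simp add: rho_append powX[OF assms] powY[OF assms] rho_letter_def)
qed

end
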